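(* Let $\mu \in \mathbb{R}$ and $\sigma > 0$. Let $z_1, z_2$ be independent random variables, each distributed as $\mathcal{N}(\mu, \sigma^2)$, and let $p_{\sigma} = \max\left( \frac{e^{z_1}}{e^{z_1}+e^{z_2}}, \frac{e^{z_2}}{e^{z_1}+e^{z_2}} \right)$ be the maximum softmax probability of the logit vector $(z_1, z_2)$. Then for any $\sigma_1, \sigma_2 > 0$ and any $\mu$, if $\sigma_2 > \sigma_1$ then $\mathbb{E}[p_{\sigma_2}] > \mathbb{E}[p_{\sigma_1}]$.
   Context: Binary classification setting: a model outputs a logit vector $(z_1,z_2)$, the predicted class probabilities are given by the softmax $p_i = e^{z_i}/(e^{z_1}+e^{z_2})$, and the confidence is the maximum softmax probability. $\mathbb{E}[p_\sigma]$ denotes the expected value of the confidence when both logits are independently drawn from $\mathcal{N}(\mu,\sigma^2)$. *)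

theory Defs
  imports "HOL-Probability.Probability"
begin

definition softmax_conf :: "real \<Rightarrow> real \<Rightarrow> real" where
  "softmax_conf z1 z2 =
     max (exp z1 / (exp z1 + exp z2)) (exp z2 / (exp z1 + exp z2))"

text \<open>Law of a single logit: N(mu, sigma^2) (sigma is the standard deviation).\<close>
definition logit_law :: "real \<Rightarrow> real \<Rightarrow> real measure" where
  "logit_law \<mu> \<sigma> = density lborel (normal_density \<mu> \<sigma>)"

definition expected_conf :: "real \<Rightarrow> real \<Rightarrow> real" where
  "expected_conf \<mu> \<sigma> =
     (\<integral>z. softmax_conf (fst z) (snd z) \<partial>(logit_law \<mu> \<sigma> \<Otimes>\<^sub>M logit_law \<mu> \<sigma>))"

end

theory Submission
  imports Defs
begin

definition hconf :: "real \<Rightarrow> real" where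
  "hconf t = 1 / (1 + exp (- \<bar>t\<bar>))"

lemma softmax_conf_eq: "softmax_conf a b = hconf (a - b)"
proof -
  have e1: "exp a / (exp a + exp b) = 1 / (1 + exp (b - a))"
    by (simp add: exp_diff field_simps add_pos_pos)
  have e2: "exp b / (exp a + exp b) = 1 / (1 + exp (a - b))"
    by (simp add: exp_diff field_simps add_pos_pos)
  show ?thesis
  proof (cases "a \<le> b")
    case True
    then have "exp (a - b) \<le> exp (b - a)" by simp
    then have "1 / (1 + exp (b - a)) \<le> 1 / (1 + exp (a - b))"
      by (intro divide_left_mono) (auto simp: add_pos_pos)
    then show ?thesis using True unfolding softmax_conf_def hconf_def e1 e2
      by (simp add: max_def abs_if)
  next
    case False
    then have "exp (b - a) \<le> exp (a - b)" by simp
    then have "1 / (1 + exp (a - b)) \<le> 1 / (1 + exp (b - a))"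
      by (intro divide_left_mono) (auto simp: add_pos_pos)
    then show ?thesis using False unfolding softmax_conf_def hconf_def e1 e2
      by (simp add: max_def abs_if)
  qed
qed

lemma hconf_mono: "\<bar>s\<bar> \<le> \<bar>t\<bar> \<Longrightarrow> hconf s \<le> hconf t"
  unfolding hconf_def by (intro divide_left_mono) (auto simp: add_pos_pos)

lemma hconf_strict: "\<bar>s\<bar> < \<bar>t\<bar> \<Longrightarrow> hconf s < hconf t"
  unfolding hconf_def by (intro divide_strict_left_mono) (auto simp: add_pos_pos)

lemma hconf_bound: "\<bar>hconf t\<bar> \<le> 1"
  unfolding hconf_def by (auto simp: add_pos_pos)

lemma hconf_meas[measurable]: "hconf \<in> borel_measurable borel"
  unfolding hconf_def by measurable

lemma prob_N: "\<sigma> > 0 \<Longrightarrow> prob_space (logit_law \<mu> \<sigma>)"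
  unfolding logit_law_def by (rule prob_space_normal_density)

lemma sets_N[simp, measurable_cong]: "sets (logit_law \<mu> \<sigma>) = sets borel"
  unfolding logit_law_def by simp

lemma law_affine:
  assumes "\<sigma> > 0"
  shows "logit_law \<mu> \<sigma> = distr (logit_law 0 1) lborel (\<lambda>x. \<mu> + \<sigma> * x)"
proof -
  interpret prob_space "logit_law 0 1" by (rule prob_N) simp
  have "distributed (logit_law 0 1) lborel (\<lambda>x. x) (normal_density 0 1)"
    unfolding distributed_def logit_law_def
    by (auto simp: distr_id2)
  from normal_density_affine[OF this, of \<sigma> \<mu>] assms
  have "distributed (logit_law 0 1) lborel (\<lambda>x. \<mu> + \<sigma> * x) (normal_density \<mu> \<sigma>)"
    by simp
  then show ?thesis unfolding distributed_def logit_law_def by simp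
qed

lemma expected_conf_alt:
  assumes "\<sigma> > 0"
  shows "expected_conf \<mu> \<sigma> =
    (\<integral>z. hconf (\<sigma> * (fst z - snd z)) \<partial>(logit_law 0 1 \<Otimes>\<^sub>M logit_law 0 1))"
proof -
  interpret P: prob_space "logit_law \<mu> \<sigma>" by (rule prob_N[OF assms])
  have meas: "(\<lambda>x. \<mu> + \<sigma> * x) \<in> measurable (logit_law 0 1) lborel"
    unfolding logit_law_def by simp
  have "logit_law \<mu> \<sigma> \<Otimes>\<^sub>M logit_law \<mu> \<sigma> =
     distr (logit_law 0 1 \<Otimes>\<^sub>M logit_law 0 1) (lborel \<Otimes>\<^sub>M lborel)
       (\<lambda>(x, y). (\<mu> + \<sigma> * x, \<mu> + \<sigma> * y))"
    apply (simp only: law_affine[OF assms])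
    apply (rule pair_measure_distr[OF meas meas])
    using law_affine[OF assms] P.sigma_finite_measure_axioms by simp
  then have "expected_conf \<mu> \<sigma> = (\<integral>z. softmax_conf (fst z) (snd z) \<partial>distr (logit_law 0 1 \<Otimes>\<^sub>M logit_law 0 1) (lborel \<Otimes>\<^sub>M lborel)
       (\<lambda>(x, y). (\<mu> + \<sigma> * x, \<mu> + \<sigma> * y)))"
    unfolding expected_conf_def by simp
  also have "\<dots> = (\<integral>z. softmax_conf (fst ((\<lambda>(x, y). (\<mu> + \<sigma> * x, \<mu> + \<sigma> * y)) z)) (snd ((\<lambda>(x, y). (\<mu> + \<sigma> * x, \<mu> + \<sigma> * y)) z)) \<partial>(logit_law 0 1 \<Otimes>\<^sub>M logit_law 0 1))"
    by (rule integral_distr) (auto simp: logit_law_def softmax_conf_eq)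
  also have "\<dots> = (\<integral>z. hconf (\<sigma> * (fst z - snd z)) \<partial>(logit_law 0 1 \<Otimes>\<^sub>M logit_law 0 1))"
    by (rule Bochner_Integration.integral_cong) (auto simp: softmax_conf_eq algebra_simps split: prod.splits)
  finally show ?thesis .
qed

lemma N_pos: "emeasure (logit_law 0 1) {a<..<b} \<noteq> 0" if "a < b"
proof
  assume "emeasure (logit_law 0 1) {a<..<b} = 0"
  then have "(\<integral>\<^sup>+ x. ennreal (normal_density 0 1 x) * indicator {a<..<b} x \<partial>lborel) = 0"
    unfolding logit_law_def by (simp add: emeasure_density)
  then have "AE x in lborel. ennreal (normal_density 0 1 x) * indicator {a<..<b} x = 0"
    by (subst (asm) nn_integral_0_iff_AE) auto
  then have "AE x in lborel. x \<notin> {a<..<b}"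
  proof (rule AE_mp)
    show "AE x in lborel. ennreal (std_normal_density x) * indicator {a<..<b} x = 0 \<longrightarrow> x \<notin> {a<..<b}"
    proof (intro AE_I2 impI)
      fix x assume "ennreal (std_normal_density x) * indicator {a<..<b} x = 0"
      moreover have "0 < std_normal_density x" using normal_density_pos[of 1 0 x] by simp
      ultimately show "x \<notin> {a<..<b}" by (auto split: split_indicator)
    qed
  qed
  then have "emeasure lborel {a<..<b} = 0"
    by (subst (asm) AE_iff_measurable[OF _ refl]) (auto simp: greaterThanLessThan_def greaterThan_def lessThan_def Int_def)
  then show False using that by simp
qed

theorem proposition1:
  fixes \<mu> \<sigma>1 \<sigma>2 :: real
  assumes "\<sigma>1 > 0" and "\<sigma>2 > 0" and "\<sigma>2 > \<sigma>1"
  shows "expected_conf \<mu> \<sigma>2 > expected_conf \<mu> \<sigma>1"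
proof -
  let ?N = "logit_law 0 1"
  interpret N: prob_space ?N by (rule prob_N) simp
  interpret PP: pair_prob_space ?N ?N ..
  have int: "integrable (?N \<Otimes>\<^sub>M ?N) (\<lambda>z. hconf (\<sigma> * (fst z - snd z)))" for \<sigma>
    by (rule PP.integrable_const_bound[where B=1]) (auto simp: hconf_bound logit_law_def)
  have A: "emeasure (?N \<Otimes>\<^sub>M ?N) ({-1<..<0} \<times> {0<..<1}) \<noteq> 0"
    using N_pos[of "-1" 0] N_pos[of 0 1] by (subst N.emeasure_pair_measure_Times) auto
  have "(\<integral>z. hconf (\<sigma>1 * (fst z - snd z)) \<partial>(?N \<Otimes>\<^sub>M ?N)) < (\<integral>z. hconf (\<sigma>2 * (fst z - snd z)) \<partial>(?N \<Otimes>\<^sub>M ?N))"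
  proof (rule PP.integral_less_AE[OF int int A])
    show "{-1<..<0} \<times> {0<..<1} \<in> sets (?N \<Otimes>\<^sub>M ?N)" by simp
    show "AE x in ?N \<Otimes>\<^sub>M ?N. x \<in> {-1<..<0} \<times> {0<..<1} \<longrightarrow> hconf (\<sigma>1 * (fst x - snd x)) \<noteq> hconf (\<sigma>2 * (fst x - snd x))"
    proof (intro AE_I2 impI)
      fix x :: "real \<times> real" assume "x \<in> {-1<..<0} \<times> {0<..<1}"
      then have "fst x - snd x \<noteq> 0" by auto
      then have "\<bar>\<sigma>1 * (fst x - snd x)\<bar> < \<bar>\<sigma>2 * (fst x - snd x)\<bar>"
        using assms by (simp add: abs_mult)
      from hconf_strict[OF this] show "hconf (\<sigma>1 * (fst x - snd x)) \<noteq> hconf (\<sigma>2 * (fst x - snd x))" by simp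
    qed
    show "AE x in ?N \<Otimes>\<^sub>M ?N. hconf (\<sigma>1 * (fst x - snd x)) \<le> hconf (\<sigma>2 * (fst x - snd x))"
      using assms by (intro AE_I2 hconf_mono) (auto simp: abs_mult intro: mult_right_mono)
  qed
  then show ?thesis using expected_conf_alt assms by simp
qed

end
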